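(* Let $A\in\mathrm{GL}(3,\mathbb{R})$ be a rotation of angle $\theta$ with $0<\theta<\pi$, and let $B=G^{-1}\,{}^tA^{-1}G$ for some $G\in\mathrm{GL}(3,\mathbb{R})$. Then $\det(\mathrm{Id}-AB)=0$ if and only if there exists a nonzero symmetric matrix $S$ such that $SB={}^tA^{-1}S$.
   Context: A matrix $A\in\mathrm{GL}(3,\mathbb{R})$ is a rotation of angle $\theta$ if there exist $Q\in\mathrm{GL}(3,\mathbb{R})$ and $\mu\ne0$ with $Q^{-1}AQ=\mu R_\theta$, where $R_\theta=\begin{pmatrix}1&0&0\\0&\cos\theta&-\sin\theta\\0&\sin\theta&\cos\theta\end{pmatrix}$. ${}^tM$ denotes the transpose of $M$. *)

theory Defs
  imports "HOL-Analysis.Analysis"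
begin

definition rot_mat :: "real \<Rightarrow> real^3^3" where
  "rot_mat \<theta> = vector [vector [1, 0, 0],
                         vector [0, cos \<theta>, - sin \<theta>],
                         vector [0, sin \<theta>, cos \<theta>]]"

definition is_rotation :: "real^3^3 \<Rightarrow> real \<Rightarrow> bool" where
  "is_rotation A \<theta> \<longleftrightarrow> invertible A \<and>
     (\<exists>Q \<mu>. invertible Q \<and> \<mu> \<noteq> 0 \<and> matrix_inv Q ** A ** Q = \<mu> *\<^sub>R rot_mat \<theta>)"

end

theory Submission
  imports Defs
begin

definition Nm :: "real^3^3 \<Rightarrow> real^3^3" where
 "Nm H = vector [vector [H$1$2, -H$2$1, H$3$1], vector [H$1$3, -H$3$1, -H$2$1],
    vector [0, H$2$3 - H$3$2, -(H$2$2 + H$3$3)]]"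

definition Xm :: "real \<Rightarrow> real \<Rightarrow> real \<Rightarrow> real^3^3" where
 "Xm a b c = vector [vector [a, 0, 0], vector [0, b, -c], vector [0, c, b]]"

lemma minv_props:
  fixes A :: "'a::semiring_1^'n^'n"
  assumes "invertible A"
  shows "A ** matrix_inv A = mat 1" "matrix_inv A ** A = mat 1"
  using someI_ex[OF assms[unfolded invertible_def]] unfolding matrix_inv_def by auto

lemma minv_unique:
  fixes A B :: "'a::semiring_1^'n^'n"
  assumes "invertible A" "A ** B = mat 1"
  shows "matrix_inv A = B"
proof -
  have "matrix_inv A = matrix_inv A ** (A ** B)" using assms by simp
  also have "\<dots> = B" by (simp add: matrix_mul_assoc minv_props(2)[OF assms(1)])
  finally show ?thesis .
qed

lemma cancel3:
  fixes A B C :: "'a::semiring_1^'n^'n"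
  assumes "B ** C = mat 1"
  shows "A ** B ** C = A"
  by (metis assms matrix_mul_assoc matrix_mul_rid)

lemma sc1: fixes A B :: "real^'n^'n" shows "(k *\<^sub>R A) ** B = k *\<^sub>R (A ** B)"
  by (simp add: scalar_matrix_assoc)
lemma sc2: fixes A B :: "real^'n^'n" shows "A ** (k *\<^sub>R B) = k *\<^sub>R (A ** B)"
  by (simp add: matrix_matrix_mult_def sum_distrib_left mult_ac vec_eq_iff scaleR_sum_right)

lemma msub_l: fixes A B C :: "real^'n^'n" shows "A ** (B - C) = A ** B - A ** C"
  by (simp add: matrix_matrix_mult_def vec_eq_iff sum_subtractf right_diff_distrib)
lemma msub_r: fixes A B C :: "real^'n^'n" shows "(B - C) ** A = B ** A - C ** A"
  by (simp add: matrix_matrix_mult_def vec_eq_iff sum_subtractf left_diff_distrib)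

lemma det_zero_iff:
  fixes M :: "real^'n^'n"
  shows "det M = 0 \<longleftrightarrow> (\<exists>v. v \<noteq> 0 \<and> M *v v = 0)"
proof
  assume "det M = 0"
  then have "\<not> inj (\<lambda>x. M *v x)"
    using det_nz_iff_inj[of "\<lambda>x. M *v x"] by simp
  then obtain x y where "x \<noteq> y" "M *v x = M *v y" unfolding inj_def by blast
  then show "\<exists>v. v \<noteq> 0 \<and> M *v v = 0"
    by (intro exI[of _ "x - y"]) (simp add: matrix_vector_mult_diff_distrib)
next
  assume "\<exists>v. v \<noteq> 0 \<and> M *v v = 0"
  then obtain v where v: "v \<noteq> 0" "M *v v = 0" by blast
  have "M *v v = M *v 0" using v by simp
  then have "\<not> inj (\<lambda>x. M *v x)" using v unfolding inj_def by blast
  then show "det M = 0"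
    using det_nz_iff_inj[of "\<lambda>x. M *v x"] by simp
qed

lemma rot_orth:
  "rot_mat t ** transpose (rot_mat t) = mat 1" "transpose (rot_mat t) ** rot_mat t = mat 1"
  by (simp_all add: rot_mat_def matrix_matrix_mult_def sum_3 transpose_def vec_eq_iff forall_3 mat_def power2_eq_square[symmetric])

lemma Xm_comm: "Xm a b c ** rot_mat t = rot_mat t ** Xm a b c"
  by (simp add: Xm_def rot_mat_def matrix_matrix_mult_def sum_3 vec_eq_iff forall_3 algebra_simps)

lemma Xm_sym: fixes H :: "real^3^3"
  shows "transpose (Xm (v$1) (v$2) (v$3) ** H) = Xm (v$1) (v$2) (v$3) ** H \<longleftrightarrow> Nm H *v v = 0"
  by (simp add: Xm_def Nm_def matrix_matrix_mult_def matrix_vector_mult_def transpose_def sum_3 vec_eq_iff forall_3 algebra_simps) linarith?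

lemma Xm_zero: fixes v :: "real^3" shows "Xm (v$1) (v$2) (v$3) = 0 \<Longrightarrow> v = 0"
  by (simp add: Xm_def vec_eq_iff forall_3)

lemma lin2:
  fixes x y c d :: real
  assumes "x * c + y * d = x" "y * c - x * d = y" "d \<noteq> 0"
  shows "x = 0 \<and> y = 0"
proof -
  have k: "((c - 1)^2 + d^2) * x = (c - 1) * (x*c + y*d - x) - d*(y*c - x*d - y)"
          "((c - 1)^2 + d^2) * y = d * (x*c + y*d - x) + (c - 1)*(y*c - x*d - y)"
    by (simp_all add: algebra_simps power2_eq_square)
  have pos: "(c - 1)^2 + d^2 \<noteq> 0" using assms(3) by (simp add: add_nonneg_eq_0_iff)
  show ?thesis using k assms pos by simp
qed

lemma comm_R:
  fixes X :: "real^3^3"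
  assumes s: "sin t \<noteq> 0" and c: "cos t \<noteq> 1" and e: "X ** rot_mat t = rot_mat t ** X"
  shows "X = Xm (X$1$1) (X$2$2) (X$3$2)"
proof -
  have E: "(X ** rot_mat t)$i$j = (rot_mat t ** X)$i$j" for i j using e by simp
  note ss = matrix_matrix_mult_def sum_3 rot_mat_def
  have e12: "X$1$2 * cos t + X$1$3 * sin t = X$1$2" using E[of 1 2] by (simp add: ss)
  have e13: "X$1$3 * cos t - X$1$2 * sin t = X$1$3" using E[of 1 3] by (simp add: ss)
  have e21: "X$2$1 = cos t * X$2$1 - sin t * X$3$1" using E[of 2 1] by (simp add: ss)
  have e31: "X$3$1 = sin t * X$2$1 + cos t * X$3$1" using E[of 3 1] by (simp add: ss)
  have e22: "X$2$2 * cos t + X$2$3 * sin t = cos t * X$2$2 - sin t * X$3$2" using E[of 2 2] by (simp add: ss)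
  have e23: "X$2$3 * cos t - X$2$2 * sin t = cos t * X$2$3 - sin t * X$3$3" using E[of 2 3] by (simp add: ss)
  have x1: "X$1$2 = 0 \<and> X$1$3 = 0" using lin2[OF e12 e13 s] .
  have x2: "X$2$1 = 0 \<and> X$3$1 = 0" 
  proof (rule lin2[where c="cos t" and d="- sin t"])
    show "X$2$1 * cos t + X$3$1 * - sin t = X$2$1" using e21 by (simp add: algebra_simps)
    show "X$3$1 * cos t - X$2$1 * - sin t = X$3$1" using e31 by (simp add: algebra_simps)
  qed (use s in simp)
  have "sin t * (X$2$3 + X$3$2) = 0" using e22 by (simp add: algebra_simps)
  then have x23: "X$2$3 = - X$3$2" using s by simp
  have "sin t * (X$3$3 - X$2$2) = 0" using e23 by (simp add: algebra_simps)
  then have x33: "X$3$3 = X$2$2" using s by simp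
  show ?thesis using x1 x2 x23 x33
    by (simp add: Xm_def vec_eq_iff forall_3)
qed

lemma poly_id:
  fixes H :: "real^3^3"
  shows "det (H ** transpose (rot_mat t) - rot_mat t ** H) = -2 * sin t * (1 - cos t) * det (Nm H)"
  unfolding det_3 Nm_def rot_mat_def
  apply (simp add: matrix_matrix_mult_def sum_3 transpose_def)
  apply (simp add: algebra_simps power2_eq_square)
  using sin_cos_squared_add[of t] by algebra

theorem lemma11p4:
  fixes A G :: "real^3^3" and \<theta> :: real
  assumes "is_rotation A \<theta>" and "0 < \<theta>" and "\<theta> < pi"
    and "invertible G"
  shows "det (mat 1 - A ** (matrix_inv G ** transpose (matrix_inv A) ** G)) = 0 \<longleftrightarrow>
         (\<exists>S :: real^3^3. S \<noteq> 0 \<and> transpose S = S \<and>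
            S ** (matrix_inv G ** transpose (matrix_inv A) ** G) = transpose (matrix_inv A) ** S)"
proof -
  obtain Q \<mu> where invA: "invertible A" and invQ: "invertible Q" and mu: "\<mu> \<noteq> 0"
    and QAQ: "matrix_inv Q ** A ** Q = \<mu> *\<^sub>R rot_mat \<theta>"
    using assms(1) unfolding is_rotation_def by blast
  have sn: "sin \<theta> > 0" using assms(2,3) by (simp add: sin_gt_zero)
  have cs: "cos \<theta> < 1" using assms(2,3)
    by (metis cos_monotone_0_pi cos_zero less_eq_real_def)
  define R where "R = rot_mat \<theta>"
  define Rt where "Rt = transpose R"
  define Qi where "Qi = matrix_inv Q"
  define Qt where "Qt = transpose Q"
  define Qti where "Qti = transpose Qi"
  define Gi where "Gi = matrix_inv G"
  define H where "H = Qt ** G ** Q"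
  define Hi where "Hi = Qi ** Gi ** Qti"
  have Q1: "Q ** Qi = mat 1" "Qi ** Q = mat 1" using minv_props[OF invQ] by (simp_all add: Qi_def)
  have Q2: "Qt ** Qti = mat 1" "Qti ** Qt = mat 1"
    using arg_cong[OF Q1(2), of transpose] arg_cong[OF Q1(1), of transpose]
    by (simp_all add: Qt_def Qti_def matrix_transpose_mul)
  have R1: "R ** Rt = mat 1" "Rt ** R = mat 1" using rot_orth by (simp_all add: R_def Rt_def)
  have G1: "G ** Gi = mat 1" "Gi ** G = mat 1" using minv_props[OF assms(4)] by (simp_all add: Gi_def)
  note canc = Q1 Q2 R1 G1 cancel3[OF Q1(1)] cancel3[OF Q1(2)] cancel3[OF Q2(1)] cancel3[OF Q2(2)]
    cancel3[OF R1(1)] cancel3[OF R1(2)] cancel3[OF G1(1)] cancel3[OF G1(2)]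
  have H1: "H ** Hi = mat 1" "Hi ** H = mat 1"
    by (simp_all add: H_def Hi_def matrix_mul_assoc canc)
  note canc2 = canc H1 cancel3[OF H1(1)] cancel3[OF H1(2)]
  note ms = matrix_mul_assoc sc1 sc2
  have Aeq: "A = \<mu> *\<^sub>R (Q ** R ** Qi)"
  proof -
    have "A = Q ** (Qi ** A ** Q) ** Qi" by (simp add: ms canc Qi_def[symmetric])
    also have "\<dots> = \<mu> *\<^sub>R (Q ** R ** Qi)" by (simp add: QAQ[folded Qi_def] R_def ms)
    finally show ?thesis .
  qed
  have Ai: "matrix_inv A = (1/\<mu>) *\<^sub>R (Q ** Rt ** Qi)"
    by (rule minv_unique[OF invA]) (simp add: Aeq ms canc mu)
  have Ceq: "transpose (matrix_inv A) = (1/\<mu>) *\<^sub>R (Qti ** R ** Qt)"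
    by (simp add: Ai transpose_scalar matrix_transpose_mul Qti_def Qt_def Rt_def matrix_mul_assoc)
  have Geq: "G = Qti ** H ** Qi" by (simp add: H_def ms canc)
  have Gieq: "matrix_inv G = Q ** Hi ** Qt" by (simp add: Gi_def[symmetric] Hi_def ms canc)
  have Beq: "matrix_inv G ** transpose (matrix_inv A) ** G = (1/\<mu>) *\<^sub>R (Q ** Hi ** R ** H ** Qi)"
    apply (subst (2) Geq) by (simp add: Gieq Ceq ms canc2)
  have ABeq: "A ** (matrix_inv G ** transpose (matrix_inv A) ** G) = Q ** (R ** Hi ** R ** H) ** Qi"
    unfolding Beq by (subst Aeq) (simp add: ms mu canc)
  define K where "K = mat 1 - R ** Hi ** R ** H"
  have dQ: "det Q * det Qi = 1" using arg_cong[OF Q1(1), of det] by (simp add: det_mul)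
  have "mat 1 - A ** (matrix_inv G ** transpose (matrix_inv A) ** G) = Q ** K ** Qi"
    by (simp add: ABeq K_def msub_l msub_r canc)
  then have d1: "det (mat 1 - A ** (matrix_inv G ** transpose (matrix_inv A) ** G)) = det K"
    using dQ by (simp add: det_mul)
  have "H ** Rt ** K = H ** Rt - R ** H"
    by (simp add: K_def msub_l ms canc2)
  then have d2: "det H * det Rt * det K = det (H ** Rt - R ** H)" by (metis det_mul)
  have dH: "det H \<noteq> 0" using arg_cong[OF H1(1), of det] by (auto simp: det_mul)
  have dRt: "det Rt \<noteq> 0" using arg_cong[OF R1(1), of det] by (auto simp: det_mul)
  have LHS: "det (mat 1 - A ** (matrix_inv G ** transpose (matrix_inv A) ** G)) = 0 \<longleftrightarrow> det (Nm H) = 0"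
    using d1 d2 dH dRt poly_id[of H \<theta>] sn cs by (auto simp: R_def Rt_def)
  have seq: "S ** (matrix_inv G ** transpose (matrix_inv A) ** G) = transpose (matrix_inv A) ** S
       \<longleftrightarrow> S ** Q ** Hi ** R ** H ** Qi = Qti ** R ** Qt ** S" for S
    unfolding Beq unfolding Ceq by (simp add: ms mu)
  have comm: "X ** R = R ** X \<Longrightarrow> X = Xm (X$1$1) (X$2$2) (X$3$2)" for X
    using comm_R[of \<theta> X] sn cs by (simp add: R_def)
  show ?thesis
  proof
    assume "det (mat 1 - A ** (matrix_inv G ** transpose (matrix_inv A) ** G)) = 0"
    then obtain v where v: "v \<noteq> 0" "Nm H *v v = 0" using LHS det_zero_iff by blast
    define X where "X = Xm (v$1) (v$2) (v$3)"
    have XR: "X ** R = R ** X" by (simp add: X_def R_def Xm_comm)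
    have XR': "Y ** X ** R = Y ** R ** X" for Y by (metis XR matrix_mul_assoc)
    define P where "P = X ** H"
    have Psym: "transpose P = P" using Xm_sym[of v H] v by (simp add: P_def X_def)
    define S where "S = Qti ** P ** Qi"
    have "transpose S = transpose Qi ** (transpose P ** transpose Qti)"
      by (simp only: S_def matrix_transpose_mul)
    then have St: "transpose S = S" by (simp add: Psym S_def Qti_def matrix_mul_assoc)
    have "Qt ** S ** Q ** Hi = X" by (simp add: S_def P_def ms canc2)
    moreover have "X \<noteq> 0" using Xm_zero[of v] v by (auto simp: X_def)
    ultimately have Sn: "S \<noteq> 0" by auto
    have "S ** Q ** Hi ** R ** H ** Qi = Qti ** R ** Qt ** S"
      by (simp add: S_def P_def ms canc2 XR')
    then show "\<exists>S :: real^3^3. S \<noteq> 0 \<and> transpose S = S \<and>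
            S ** (matrix_inv G ** transpose (matrix_inv A) ** G) = transpose (matrix_inv A) ** S"
      using Sn St seq by blast
  next
    assume "\<exists>S :: real^3^3. S \<noteq> 0 \<and> transpose S = S \<and>
            S ** (matrix_inv G ** transpose (matrix_inv A) ** G) = transpose (matrix_inv A) ** S"
    then obtain S :: "real^3^3" where Sn: "S \<noteq> 0" and St: "transpose S = S"
      and E: "S ** Q ** Hi ** R ** H ** Qi = Qti ** R ** Qt ** S" using seq by blast
    define X where "X = Qt ** S ** Q ** Hi"
    have "Qt ** (S ** Q ** Hi ** R ** H ** Qi) ** Q ** Hi = Qt ** (Qti ** R ** Qt ** S) ** Q ** Hi"
      by (simp only: E)
    then have XR: "X ** R = R ** X" by (simp add: X_def ms canc2)
    have XH: "X ** H = Qt ** S ** Q" by (simp add: X_def ms canc2)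
    have "transpose (X ** H) = X ** H"
      unfolding XH by (simp add: matrix_transpose_mul St Qt_def matrix_mul_assoc)
    have "S = Qti ** X ** H ** Qi" by (simp add: X_def ms canc2)
    then have Xn: "X \<noteq> 0" using Sn by auto
    define v :: "real^3" where "v = vector [X$1$1, X$2$2, X$3$2]"
    have Xv: "X = Xm (v$1) (v$2) (v$3)" using comm[OF XR] by (simp add: v_def)
    have "Nm H *v v = 0" using Xm_sym[of v H] \<open>transpose (X ** H) = X ** H\<close> Xv by simp
    moreover have "v \<noteq> 0" using Xn Xv by (auto simp: Xm_def vec_eq_iff forall_3)
    ultimately have "det (Nm H) = 0" using det_zero_iff by blast
    then show "det (mat 1 - A ** (matrix_inv G ** transpose (matrix_inv A) ** G)) = 0"
      using LHS by simp
  qed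
qed

end
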